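(* Let $I\subset\mathbb{R}$ be an interval, $\psi:I\to\mathbb{R}$ a non-decreasing convex function, $n\ge2$, $a=(a_1,\dots,a_n)\in I^n$ a relative convex sequence, and $t=(t_1,\dots,t_n)\in T_a$. Let $p=(p_1,\dots,p_n)\in[0,\infty)^n$ with $P_n=\sum p_i>0$ and assume $M_{n,p}(t)<t_n$ (i.e. $p_i>0$ for some $i<n$). Put $$m=\lfloor M_{n,p}(t)\rfloor_t,\quad \gamma_t=\frac{M_{n,p}(t)-t_m}{t_{m+1}-t_m},\quad \lambda_t=\frac{t_n-M_{n,p}(t)}{t_n-t_1}.$$ Then $$\gamma_t\,\psi(a_{m+1})+(1-\gamma_t)\,\psi(a_m)\le\frac1{P_n}\sum_{i=1}^n p_i\psi(a_i)\le \lambda_t\,\psi(a_1)+(1-\lambda_t)\,\psi(a_n).$$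
   Context: For a real sequence $(x_i)$, $\Delta x_i=x_{i+1}-x_i$. "Increasing" means strictly increasing. For a real sequence $a=(a_i)_{i=1}^n$, $T_a$ denotes the set of increasing real sequences $(t_i)_{i=1}^n$ such that $(\Delta a_i/\Delta t_i)_{i=1}^{n-1}$ is non-decreasing; $a$ is relative convex if $T_a\ne\emptyset$. $M_{n,p}(t)=\frac1{P_n}\sum_{i=1}^n p_it_i$. For an increasing sequence $t=(t_1,\dots,t_n)$ and $q\in[t_1,t_n]$, $\lfloor q\rfloor_t$ denotes the index $i$ of the largest $t_i$ with $t_i\le q$. *)

theory Defs
  imports "HOL-Analysis.Analysis"
begin

text \<open>Sequences of length n are functions nat \<Rightarrow> real, used on indices 1..n.\<close>

definition incr_seq :: "nat \<Rightarrow> (nat \<Rightarrow> real) \<Rightarrow> bool" where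
  "incr_seq n t \<longleftrightarrow> (\<forall>i\<in>{1..<n}. t i < t (Suc i))"

definition T_set :: "nat \<Rightarrow> (nat \<Rightarrow> real) \<Rightarrow> (nat \<Rightarrow> real) set" where
  "T_set n a = {t. incr_seq n t \<and>
     (\<forall>i\<in>{1..<n}. \<forall>j\<in>{1..<n}. i \<le> j \<longrightarrow>
        (a (Suc i) - a i) / (t (Suc i) - t i) \<le> (a (Suc j) - a j) / (t (Suc j) - t j))}"

definition relative_convex :: "nat \<Rightarrow> (nat \<Rightarrow> real) \<Rightarrow> bool" where
  "relative_convex n a \<longleftrightarrow> T_set n a \<noteq> {}"

definition P_sum :: "nat \<Rightarrow> (nat \<Rightarrow> real) \<Rightarrow> real" where
  "P_sum n p = (\<Sum>i=1..n. p i)"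

definition M_mean :: "nat \<Rightarrow> (nat \<Rightarrow> real) \<Rightarrow> (nat \<Rightarrow> real) \<Rightarrow> real" where
  "M_mean n p t = (1 / P_sum n p) * (\<Sum>i=1..n. p i * t i)"

definition floor_idx :: "nat \<Rightarrow> (nat \<Rightarrow> real) \<Rightarrow> real \<Rightarrow> nat" where
  "floor_idx n t q = (GREATEST i. i \<in> {1..n} \<and> t i \<le> q)"

end

theory Submission
  imports Defs
begin

lemma slope_sum_le:
  fixes s t :: "nat \<Rightarrow> real"
  shows "j \<le> i \<Longrightarrow> (\<forall>k\<in>{j..<i}. s (Suc k) - s k \<le> c * (t (Suc k) - t k))
    \<Longrightarrow> s i - s j \<le> c * (t i - t j)"
proof (induction i)
  case 0
  then show ?case by simp
next
  case (Suc i)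
  show ?case
  proof (cases "j = Suc i")
    case True then show ?thesis by simp
  next
    case False
    then have "j \<le> i" using Suc.prems by simp
    then have "s i - s j \<le> c * (t i - t j)" using Suc by auto
    moreover have "s (Suc i) - s i \<le> c * (t (Suc i) - t i)" using Suc.prems \<open>j \<le> i\<close> by auto
    ultimately show ?thesis by (simp add: algebra_simps)
  qed
qed

lemma slope_sum_ge:
  fixes s t :: "nat \<Rightarrow> real"
  assumes "j \<le> i" "\<forall>k\<in>{j..<i}. s (Suc k) - s k \<ge> c * (t (Suc k) - t k)"
  shows "s i - s j \<ge> c * (t i - t j)"
proof -
  have "(\<lambda>x. - s x) i - (\<lambda>x. - s x) j \<le> (-c) * (t i - t j)"
    by (rule slope_sum_le) (use assms in auto)
  then show ?thesis by simp
qed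

theorem theorem4p3:
  fixes I :: "real set" and \<psi> :: "real \<Rightarrow> real" and n :: nat
    and a t p :: "nat \<Rightarrow> real"
  assumes "is_interval I"
    and "mono_on I \<psi>" and "convex_on I \<psi>"
    and "n \<ge> 2"
    and "\<forall>i\<in>{1..n}. a i \<in> I"
    and "relative_convex n a"
    and "t \<in> T_set n a"
    and "\<forall>i\<in>{1..n}. p i \<ge> 0"
    and "P_sum n p > 0"
    and "M_mean n p t < t n"
  shows "let M = M_mean n p t; m = floor_idx n t M;
             gam = (M - t m) / (t (Suc m) - t m);
             lam = (t n - M) / (t n - t 1)
         in gam * \<psi> (a (Suc m)) + (1 - gam) * \<psi> (a m)
              \<le> (1 / P_sum n p) * (\<Sum>i=1..n. p i * \<psi> (a i))
          \<and> (1 / P_sum n p) * (\<Sum>i=1..n. p i * \<psi> (a i))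
              \<le> lam * \<psi> (a 1) + (1 - lam) * \<psi> (a n)"
proof -
  define s where "s i = \<psi> (a i)" for i
  define \<sigma> where "\<sigma> k = (s (Suc k) - s k) / (t (Suc k) - t k)" for k
  have tinc: "\<And>k. 1 \<le> k \<Longrightarrow> k < n \<Longrightarrow> t k < t (Suc k)"
    using assms(7) by (auto simp: T_set_def incr_seq_def)
  have aslope: "\<And>k l. 1 \<le> k \<Longrightarrow> k \<le> l \<Longrightarrow> l < n \<Longrightarrow>
      (a (Suc k) - a k) / (t (Suc k) - t k) \<le> (a (Suc l) - a l) / (t (Suc l) - t l)"
    using assms(7) by (auto simp: T_set_def)
  have cvxI: "convex I" using assms(3) by (rule convex_on_imp_convex)
  have step1: "\<sigma> k \<le> \<sigma> (Suc k)" if k: "1 \<le> k" "Suc (Suc k) \<le> n" for k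
  proof -
    define h1 where "h1 = t (Suc k) - t k"
    define h2 where "h2 = t (Suc (Suc k)) - t (Suc k)"
    have h1: "h1 > 0" using tinc[of k] k by (simp add: h1_def)
    have h2: "h2 > 0" using tinc[of "Suc k"] k by (simp add: h2_def)
    define d1 where "d1 = (a (Suc k) - a k) / h1"
    define d2 where "d2 = (a (Suc (Suc k)) - a (Suc k)) / h2"
    have d12: "d1 \<le> d2" using aslope[of k "Suc k"] k by (simp add: d1_def d2_def h1_def h2_def)
    define \<mu> where "\<mu> = h1 / (h1 + h2)"
    have mu: "0 \<le> \<mu>" "\<mu> \<le> 1" using h1 h2 by (auto simp: \<mu>_def)
    define w where "w = (1 - \<mu>) * a k + \<mu> * a (Suc (Suc k))"
    have ak: "a k \<in> I" "a (Suc k) \<in> I" "a (Suc (Suc k)) \<in> I" using assms(5) k by auto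
    have wI: "w \<in> I" unfolding w_def
      using convexD[OF cvxI ak(1) ak(3), of "1 - \<mu>" \<mu>] mu by simp
    have e1: "a (Suc k) = a k + h1 * d1" using h1 by (simp add: d1_def)
    have e2: "a (Suc (Suc k)) = a k + h1 * d1 + h2 * d2" using h1 h2 by (simp add: d1_def d2_def)
    have "w = a k + \<mu> * (h1 * d1 + h2 * d2)"
      unfolding w_def e2 by (simp add: algebra_simps)
    also have "\<dots> = a k + h1 * (d1 * h1 + d2 * h2) / (h1 + h2)"
      by (simp add: \<mu>_def algebra_simps add_divide_distrib)
    finally have "w = a k + h1 * (d1 * h1 + d2 * h2) / (h1 + h2)" .
    moreover have "h1 * d1 \<le> h1 * (d1 * h1 + d2 * h2) / (h1 + h2)"
    proof -
      have "d1 * (h1 + h2) \<le> d1 * h1 + d2 * h2" using d12 h2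
        by (simp add: algebra_simps mult_right_mono)
      then have "d1 \<le> (d1 * h1 + d2 * h2) / (h1 + h2)" using h1 h2 by (simp add: field_simps)
      then have "h1 * d1 \<le> h1 * ((d1 * h1 + d2 * h2) / (h1 + h2))" by (rule mult_left_mono) (use h1 in simp)
      then show ?thesis by (simp only: times_divide_eq_right)
    qed
    ultimately have yw: "a (Suc k) \<le> w" using e1 by simp
    have "s (Suc k) \<le> \<psi> w" unfolding s_def using mono_onD[OF assms(2) ak(2) wI yw] .
    also have "\<psi> w \<le> (1 - \<mu>) * s k + \<mu> * s (Suc (Suc k))"
      using convex_onD[OF assms(3) mu ak(1) ak(3)] by (simp add: w_def s_def)
    also have "(1 - \<mu>) * s k + \<mu> * s (Suc (Suc k)) = (h2 * s k + h1 * s (Suc (Suc k))) / (h1 + h2)"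
    proof -
      have hne: "h1 + h2 \<noteq> 0" using h1 h2 by simp
      have "1 - \<mu> = h2 / (h1 + h2)" using hne by (simp add: \<mu>_def field_simps)
      then show ?thesis using hne by (simp add: \<mu>_def add_divide_distrib)
    qed
    finally have "s (Suc k) * (h1 + h2) \<le> h2 * s k + h1 * s (Suc (Suc k))"
      using h1 h2 by (simp add: pos_le_divide_eq)
    then have "(h1 + h2) * s (Suc k) \<le> h2 * s k + h1 * s (Suc (Suc k))" by (simp add: mult.commute)
    then have "h2 * (s (Suc k) - s k) \<le> h1 * (s (Suc (Suc k)) - s (Suc k))"
      by (simp add: algebra_simps)
    then show ?thesis using h1 h2
      by (simp add: \<sigma>_def h1_def[symmetric] h2_def[symmetric] divide_simps mult.commute)
  qed
  have smono: "\<sigma> k \<le> \<sigma> l" if "1 \<le> k" "k \<le> l" "Suc l \<le> n" for k l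
    using that
  proof (induction l)
    case 0 then show ?case by simp
  next
    case (Suc l)
    show ?case
    proof (cases "k = Suc l")
      case True then show ?thesis by simp
    next
      case False
      then have "\<sigma> k \<le> \<sigma> l" using Suc by auto
      also have "\<sigma> l \<le> \<sigma> (Suc l)" using step1[of l] Suc.prems False by auto
      finally show ?thesis .
    qed
  qed
  have ds: "s (Suc k) - s k = \<sigma> k * (t (Suc k) - t k)" if "1 \<le> k" "k < n" for k
    using tinc[OF that] by (simp add: \<sigma>_def)
  have tmono: "t j \<le> t i" if "1 \<le> j" "j \<le> i" "i \<le> n" for i j
  proof -
    have "t i - t j \<ge> 0 * (t i - t j)"
      by (rule slope_sum_ge) (use that tinc in \<open>auto intro: less_imp_le\<close>)
    then show ?thesis by simp
  qed
  define P where "P = P_sum n p"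
  define T where "T = (\<Sum>i=1..n. p i * t i)"
  define S where "S = (\<Sum>i=1..n. p i * s i)"
  define M where "M = M_mean n p t"
  have P: "P > 0" using assms(9) P_def by simp
  have PS: "P = (\<Sum>i=1..n. p i)" by (simp add: P_def P_sum_def)
  have MT: "M = T / P" by (simp add: M_def M_mean_def T_def P_def)
  have Mn: "M < t n" using assms(10) M_def by simp
  have "T \<ge> (\<Sum>i=1..n. p i * t 1)"
    unfolding T_def by (rule sum_mono) (use assms(8) tmono in \<open>auto intro: mult_left_mono\<close>)
  then have "T \<ge> P * t 1" by (simp add: PS sum_distrib_right)
  then have M1: "t 1 \<le> M" using P by (simp add: MT field_simps)
  define m where "m = floor_idx n t M"
  have bnd: "\<And>y. y \<in> {1..n} \<and> t y \<le> M \<Longrightarrow> y \<le> n" by auto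
  have mP: "m \<in> {1..n} \<and> t m \<le> M" unfolding m_def floor_idx_def
    by (rule GreatestI_ex_nat[OF _ bnd]) (use M1 assms(4) in auto)
  have mn: "m < n" using mP Mn by (metis atLeastAtMost_iff le_neq_implies_less not_le)
  have m1: "1 \<le> m" using mP by simp
  have tm: "t m \<le> M" using mP by simp
  have tsm: "M < t (Suc m)"
  proof (rule ccontr)
    assume "\<not> M < t (Suc m)"
    then have "Suc m \<in> {1..n} \<and> t (Suc m) \<le> M" using mn by auto
    then have "Suc m \<le> m" unfolding m_def floor_idx_def
      by (rule Greatest_le_nat[OF _ bnd])
    then show False by simp
  qed
  define c where "c = \<sigma> m"
  have hm: "t (Suc m) - t m > 0" using tinc[OF m1 mn] by simp
  have low: "s i \<ge> s m + c * (t i - t m)" if i: "1 \<le> i" "i \<le> n" for i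
  proof (cases "Suc m \<le> i")
    case True
    have "s i - s (Suc m) \<ge> c * (t i - t (Suc m))"
    proof (rule slope_sum_ge[OF True], intro ballI)
      fix k assume k: "k \<in> {Suc m..<i}"
      then have "c \<le> \<sigma> k" unfolding c_def using smono[of m k] m1 i by auto
      moreover have "t (Suc k) - t k \<ge> 0" using tinc[of k] k m1 i by auto
      ultimately show "s (Suc k) - s k \<ge> c * (t (Suc k) - t k)"
        using ds[of k] k m1 i by (auto intro: mult_right_mono)
    qed
    moreover have "s (Suc m) = s m + c * (t (Suc m) - t m)" using ds[OF m1 mn] c_def by simp
    ultimately show ?thesis by (simp add: algebra_simps)
  next
    case False
    then have im: "i \<le> m" by simp
    have "s m - s i \<le> c * (t m - t i)"
    proof (rule slope_sum_le[OF im], intro ballI)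
      fix k assume k: "k \<in> {i..<m}"
      then have "\<sigma> k \<le> c" unfolding c_def using smono[of k m] mn i by auto
      moreover have "t (Suc k) - t k \<ge> 0" using tinc[of k] k mn i by auto
      ultimately show "s (Suc k) - s k \<le> c * (t (Suc k) - t k)"
        using ds[of k] k mn i by (auto intro: mult_right_mono)
    qed
    then show ?thesis by (simp add: algebra_simps)
  qed
  have "S \<ge> (\<Sum>i=1..n. p i * (s m + c * (t i - t m)))"
    unfolding S_def by (rule sum_mono) (use assms(8) low in \<open>auto intro: mult_left_mono\<close>)
  also have "(\<Sum>i=1..n. p i * (s m + c * (t i - t m))) = P * s m + c * (T - t m * P)"
    by (simp add: PS T_def algebra_simps sum.distrib sum_distrib_left sum_distrib_right sum_subtractf)
  finally have Slow: "S \<ge> P * s m + c * (T - t m * P)" .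
  define gam where "gam = (M - t m) / (t (Suc m) - t m)"
  have "gam * s (Suc m) + (1 - gam) * s m = s m + c * (M - t m)"
  proof -
    have "gam * s (Suc m) + (1 - gam) * s m = s m + gam * (s (Suc m) - s m)" by (simp add: algebra_simps)
    also have "gam * (s (Suc m) - s m) = gam * (t (Suc m) - t m) * c"
      using ds[OF m1 mn] by (simp add: c_def)
    also have "gam * (t (Suc m) - t m) = M - t m" using hm by (simp add: gam_def)
    finally show ?thesis by simp
  qed
  also have "\<dots> \<le> S / P"
  proof -
    have "(s m + c * (M - t m)) * P = P * s m + c * (T - t m * P)" using P by (simp add: MT field_simps)
    then show ?thesis using Slow P by (simp add: pos_le_divide_eq)
  qed
  finally have L: "gam * s (Suc m) + (1 - gam) * s m \<le> S / P" .
  have tn1: "t n - t 1 > 0" using tmono[of 1 m] m1 mn Mn tm by linarith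
  define C where "C = (s n - s 1) / (t n - t 1)"
  have up: "s i \<le> s 1 + C * (t i - t 1)" if i: "1 \<le> i" "i \<le> n" for i
  proof (cases "i = 1 \<or> i = n")
    case True then show ?thesis using tn1 by (auto simp: C_def)
  next
    case False
    then have i2: "2 \<le> i" "i < n" using i by auto
    define \<tau> where "\<tau> = \<sigma> (i - 1)"
    have A: "s i - s 1 \<le> \<tau> * (t i - t 1)"
    proof (rule slope_sum_le, use i in simp, intro ballI)
      fix k assume k: "k \<in> {1..<i}"
      then have "\<sigma> k \<le> \<tau>" unfolding \<tau>_def using smono[of k "i - 1"] i2 by auto
      moreover have "t (Suc k) - t k \<ge> 0" using tinc[of k] k i2 by auto
      ultimately show "s (Suc k) - s k \<le> \<tau> * (t (Suc k) - t k)"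
        using ds[of k] k i2 by (auto intro: mult_right_mono)
    qed
    have B: "s n - s i \<ge> \<tau> * (t n - t i)"
    proof (rule slope_sum_ge, use i in simp, intro ballI)
      fix k assume k: "k \<in> {i..<n}"
      then have "\<tau> \<le> \<sigma> k" unfolding \<tau>_def using smono[of "i - 1" k] i2 by auto
      moreover have "t (Suc k) - t k \<ge> 0" using tinc[of k] k i2 by auto
      ultimately show "s (Suc k) - s k \<ge> \<tau> * (t (Suc k) - t k)"
        using ds[of k] k i2 by (auto intro: mult_right_mono)
    qed
    define u where "u = t i - t 1"
    define v where "v = t n - t i"
    have u: "u \<ge> 0" using tmono[of 1 i] i by (simp add: u_def)
    have v: "v \<ge> 0" using tmono[of i n] i by (simp add: v_def)
    have "(s i - s 1) * v \<le> \<tau> * u * v" using A v by (simp add: u_def mult_right_mono)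
    also have "\<dots> \<le> (s n - s i) * u" using B u
      by (metis mult.assoc mult.commute mult_right_mono v_def)
    finally have "(s i - s 1) * (u + v) \<le> (s n - s 1) * u" by (simp add: algebra_simps)
    moreover have "u + v = t n - t 1" by (simp add: u_def v_def)
    ultimately have "(s i - s 1) \<le> (s n - s 1) * u / (t n - t 1)"
      using tn1 by (simp add: field_simps)
    then show ?thesis by (simp add: C_def u_def)
  qed
  have "S \<le> (\<Sum>i=1..n. p i * (s 1 + C * (t i - t 1)))"
    unfolding S_def by (rule sum_mono) (use assms(8) up in \<open>auto intro: mult_left_mono\<close>)
  also have "(\<Sum>i=1..n. p i * (s 1 + C * (t i - t 1))) = P * s 1 + C * (T - t 1 * P)"
    by (simp add: PS T_def algebra_simps sum.distrib sum_distrib_left sum_distrib_right sum_subtractf)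
  finally have Sup: "S \<le> P * s 1 + C * (T - t 1 * P)" .
  define lam where "lam = (t n - M) / (t n - t 1)"
  have "S / P \<le> s 1 + C * (M - t 1)"
  proof -
    have "(s 1 + C * (M - t 1)) * P = P * s 1 + C * (T - t 1 * P)" using P by (simp add: MT field_simps)
    then show ?thesis using Sup P by (simp add: pos_divide_le_eq)
  qed
  also have "\<dots> = lam * s 1 + (1 - lam) * s n"
  proof -
    have ne: "t n - t 1 \<noteq> 0" using tn1 by simp
    have "1 - lam = (M - t 1) / (t n - t 1)" using ne by (simp add: lam_def field_simps)
    have "lam * s 1 + (1 - lam) * s n = s 1 + (1 - lam) * (s n - s 1)" by (simp add: algebra_simps)
    also have "\<dots> = s 1 + (M - t 1) / (t n - t 1) * (s n - s 1)" using \<open>1 - lam = _\<close> by simp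
    also have "\<dots> = s 1 + C * (M - t 1)" by (simp add: C_def)
    finally show ?thesis by simp
  qed
  finally have U: "S / P \<le> lam * s 1 + (1 - lam) * s n" .
  show ?thesis
  proof -
    have e: "(\<Sum>i=1..n. p i * \<psi> (a i)) = S" by (simp add: S_def s_def)
    show ?thesis
      using L U unfolding Let_def e
      unfolding M_def[symmetric] m_def[symmetric] gam_def[symmetric] lam_def[symmetric]
        P_def[symmetric] s_def[symmetric]
      by simp
  qed
qed

end
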